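(* Let $n,g,k$ be integers with $1\leq g\leq \left\lfloor \frac{n-k-2}{2}\right\rfloor$. Let $G^k_n$ be the graph obtained from three disjoint cliques $K_{n-k-g}$, $K_{k-1}$, $K_{g+1}$ by adding all edges between $V(K_{n-k-g})$ and $V(K_{k-1})$ and all edges between $V(K_{g+1})$ and $V(K_{k-1})$. Then $\kappa^g(G^k_n)=k-1$.
   Context: For a connected graph $G=(V,E)$ and integer $g\ge0$: a set $F\subseteq V$ is a $g$-good-neighbor faulty set if $|N(v)\cap (V-F)|\geq g$ for every $v\in V-F$; a $g$-good-neighbor cut is such an $F$ with $G-F$ disconnected; $\kappa^g(G)$ is the minimum cardinality of a $g$-good-neighbor cut. *)

theory Defs
  imports Main
begin

text \<open>Simple graphs are given by a vertex set V and an edge predicate E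
  (assumed symmetric and irreflexive on V where relevant).\<close>

definition nbrs :: "('a \<Rightarrow> 'a \<Rightarrow> bool) \<Rightarrow> 'a set \<Rightarrow> 'a \<Rightarrow> 'a set" where
  "nbrs E V v = {u \<in> V. E v u}"

definition connected_on :: "('a \<Rightarrow> 'a \<Rightarrow> bool) \<Rightarrow> 'a set \<Rightarrow> bool" where
  "connected_on E S \<longleftrightarrow>
     (\<forall>u\<in>S. \<forall>v\<in>S. (u, v) \<in> {(x, y). x \<in> S \<and> y \<in> S \<and> E x y}\<^sup>*)"

definition good_neighbor_faulty :: "'a set \<Rightarrow> ('a \<Rightarrow> 'a \<Rightarrow> bool) \<Rightarrow> nat \<Rightarrow> 'a set \<Rightarrow> bool" where
  "good_neighbor_faulty V E g F \<longleftrightarrow>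
     F \<subseteq> V \<and> (\<forall>v \<in> V - F. card (nbrs E V v \<inter> (V - F)) \<ge> g)"

definition good_neighbor_cut :: "'a set \<Rightarrow> ('a \<Rightarrow> 'a \<Rightarrow> bool) \<Rightarrow> nat \<Rightarrow> 'a set \<Rightarrow> bool" where
  "good_neighbor_cut V E g F \<longleftrightarrow>
     good_neighbor_faulty V E g F \<and> \<not> connected_on E (V - F)"

definition kappa_g :: "'a set \<Rightarrow> ('a \<Rightarrow> 'a \<Rightarrow> bool) \<Rightarrow> nat \<Rightarrow> nat" where
  "kappa_g V E g = Min {card F | F. good_neighbor_cut V E g F}"

text \<open>The graph G^k_n on vertex set {0..<n}: A = {0..<n-k-g} (clique K_{n-k-g}),
  B = {n-k-g..<n-g-1} (clique K_{k-1}), C = {n-g-1..<n} (clique K_{g+1});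
  all A-B and C-B edges are added.\<close>
definition Gkn_V :: "nat \<Rightarrow> nat set" where
  "Gkn_V n = {0..<n}"

definition Gkn_E :: "nat \<Rightarrow> nat \<Rightarrow> nat \<Rightarrow> nat \<Rightarrow> nat \<Rightarrow> bool" where
  "Gkn_E n g k u v \<longleftrightarrow> u \<noteq> v \<and> u < n \<and> v < n \<and>
     (let A = {0..<n-k-g}; B = {n-k-g..<n-g-1}; C = {n-g-1..<n} in
       (u \<in> A \<and> v \<in> A) \<or> (u \<in> C \<and> v \<in> C) \<or> u \<in> B \<or> v \<in> B)"

end

theory Submission
  imports Defs
begin

theorem lemma4p4:
  fixes n g k :: nat
  assumes "1 \<le> k"
    and "1 \<le> g"
    and "g \<le> (n - k - 2) div 2"
  shows "kappa_g (Gkn_V n) (Gkn_E n g k) g = k - 1"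
proof -
  define V where "V = Gkn_V n"
  define E where "E = Gkn_E n g k"
  define a where "a = n - k - g"
  define B where "B = {a..<n-g-1}"
  have ag: "a \<ge> g + 2" "n = a + (k - 1) + (g + 1)" using assms unfolding a_def by auto
  have Edef: "E u v \<longleftrightarrow> u \<noteq> v \<and> u < n \<and> v < n \<and>
       ((u < a \<and> v < a) \<or> (u \<ge> n-g-1 \<and> v \<ge> n-g-1) \<or> u \<in> B \<or> v \<in> B)" for u v
    unfolding E_def Gkn_E_def B_def a_def Let_def by auto
  have Vd: "V = {0..<n}" unfolding V_def Gkn_V_def by simp
  have cardB: "card B = k - 1" unfolding B_def using ag by simp
  have cutB: "good_neighbor_cut V E g B"
    unfolding good_neighbor_cut_def good_neighbor_faulty_def
  proof (intro conjI ballI)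
    show "B \<subseteq> V" unfolding B_def Vd by auto
  next
    fix v assume v: "v \<in> V - B"
    show "g \<le> card (nbrs E V v \<inter> (V - B))"
    proof (cases "v < a")
      case True
      have "{0..<a} - {v} \<subseteq> nbrs E V v \<inter> (V - B)"
        using True ag unfolding nbrs_def Vd Edef B_def by auto
      moreover have "card ({0..<a} - {v}) = a - 1" using True by simp
      ultimately have "a - 1 \<le> card (nbrs E V v \<inter> (V - B))"
        by (metis Vd card_mono finite_Diff finite_Int finite_atLeastLessThan)
      then show ?thesis using ag by linarith
    next
      case False
      then have vC: "v \<ge> n - g - 1" "v < n" using v unfolding Vd B_def by auto
      have "{n-g-1..<n} - {v} \<subseteq> nbrs E V v \<inter> (V - B)"
        using vC ag unfolding nbrs_def Vd Edef B_def by auto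
      moreover have "card ({n-g-1..<n} - {v}) = g" using vC ag by simp
      ultimately show ?thesis
        by (metis Vd card_mono finite_Diff finite_Int finite_atLeastLessThan)
    qed
  next
    show "\<not> connected_on E (V - B)"
    proof
      assume c: "connected_on E (V - B)"
      have "0 \<in> V - B" "n - 1 \<in> V - B" using ag unfolding Vd B_def by auto
      with c have r: "(0, n-1) \<in> {(x, y). x \<in> V - B \<and> y \<in> V - B \<and> E x y}\<^sup>*"
        unfolding connected_on_def by blast
      have "\<forall>y. (0::nat, y) \<in> {(x, y). x \<in> V - B \<and> y \<in> V - B \<and> E x y}\<^sup>* \<longrightarrow> y < a"
      proof (intro allI impI)
        fix y assume "(0::nat, y) \<in> {(x, y). x \<in> V - B \<and> y \<in> V - B \<and> E x y}\<^sup>*"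
        then show "y < a"
        proof (induction rule: rtrancl_induct)
          case base then show ?case using ag by simp
        next
          case (step y z) then show ?case unfolding Edef B_def Vd using ag by auto
        qed
      qed
      with r show False using ag by auto
    qed
  qed
  have lower: "B \<subseteq> F" if "good_neighbor_cut V E g F" for F
  proof (rule ccontr)
    assume "\<not> B \<subseteq> F"
    then obtain b where b: "b \<in> B" "b \<notin> F" by auto
    have bV: "b \<in> V - F" using b ag unfolding B_def Vd by auto
    have "connected_on E (V - F)" unfolding connected_on_def
    proof (intro ballI)
      fix u v assume u: "u \<in> V - F" and v: "v \<in> V - F"
      let ?R = "{(x, y). x \<in> V - F \<and> y \<in> V - F \<and> E x y}"
      have ub: "(u, b) \<in> ?R\<^sup>*"
      proof (cases "u = b")
        case False
        then have "(u, b) \<in> ?R" using u bV b(1) unfolding Edef Vd by auto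
        then show ?thesis by blast
      qed simp
      have bv: "(b, v) \<in> ?R\<^sup>*"
      proof (cases "v = b")
        case False
        then have "(b, v) \<in> ?R" using v bV b(1) unfolding Edef Vd by auto
        then show ?thesis by blast
      qed simp
      show "(u, v) \<in> ?R\<^sup>*" using ub bv by (meson rtrancl_trans)
    qed
    then show False using that unfolding good_neighbor_cut_def by blast
  qed
  let ?S = "{card F | F. good_neighbor_cut V E g F}"
  have fin: "finite ?S"
  proof (rule finite_subset)
    show "?S \<subseteq> {..n}"
    proof
      fix x assume "x \<in> ?S"
      then obtain F where "x = card F" "good_neighbor_cut V E g F" by blast
      then have "F \<subseteq> V" unfolding good_neighbor_cut_def good_neighbor_faulty_def by blast
      then have "card F \<le> card V" unfolding Vd by (metis card_mono finite_atLeastLessThan)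
      then show "x \<in> {..n}" using \<open>x = card F\<close> unfolding Vd by simp
    qed
  qed simp
  have "Min ?S = k - 1"
  proof (rule Min_eqI[OF fin])
    fix y assume "y \<in> ?S"
    then obtain F where F: "y = card F" "good_neighbor_cut V E g F" by blast
    then have "F \<subseteq> V" unfolding good_neighbor_cut_def good_neighbor_faulty_def by blast
    then have "finite F" unfolding Vd using finite_subset by blast
    then show "k - 1 \<le> y" using F lower[OF F(2)] cardB card_mono by metis
  next
    show "k - 1 \<in> ?S" using cutB cardB by force
  qed
  then show ?thesis unfolding kappa_g_def V_def E_def .
qed

end
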